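(* Let $R$ be a commutative Noetherian ring with unity such that $\Gamma_E(R)$ has at least three vertices. Then $\Gamma_E(R)$ is not a complete graph.
   Context: For $x,y\in R$ write $x\sim y$ iff $\operatorname{ann}(x)=\operatorname{ann}(y)$; $[x]$ denotes the equivalence class of $x$. Let $Z^*(R)$ be the set of nonzero zero divisors of $R$. The graph $\Gamma_E(R)$ is the simple graph whose vertices are the classes $[x]$ with $x\in Z^*(R)$, two distinct vertices $[x],[y]$ being adjacent iff $xy=0$ (this is independent of representatives). *)

theory Defs
  imports "HOL-Algebra.Ring_Divisibility"
begin

definition ann :: "('a, 'b) ring_scheme \<Rightarrow> 'a \<Rightarrow> 'a set" where
  "ann R x = {y \<in> carrier R. x \<otimes>\<^bsub>R\<^esub> y = \<zero>\<^bsub>R\<^esub>}"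

definition nz_zero_divisors :: "('a, 'b) ring_scheme \<Rightarrow> 'a set" where
  "nz_zero_divisors R = {x \<in> carrier R. x \<noteq> \<zero>\<^bsub>R\<^esub> \<and>
      (\<exists>y \<in> carrier R. y \<noteq> \<zero>\<^bsub>R\<^esub> \<and> x \<otimes>\<^bsub>R\<^esub> y = \<zero>\<^bsub>R\<^esub>)}"

definition ann_class :: "('a, 'b) ring_scheme \<Rightarrow> 'a \<Rightarrow> 'a set" where
  "ann_class R x = {y \<in> carrier R. ann R y = ann R x}"

definition GammaE_vertices :: "('a, 'b) ring_scheme \<Rightarrow> 'a set set" where
  "GammaE_vertices R = ann_class R ` nz_zero_divisors R"

text \<open>Adjacency: distinct classes [x], [y] with xy = 0 (independent of representatives).\<close>
definition GammaE_adj :: "('a, 'b) ring_scheme \<Rightarrow> 'a set \<Rightarrow> 'a set \<Rightarrow> bool" where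
  "GammaE_adj R A B \<longleftrightarrow> A \<noteq> B \<and>
      (\<exists>x \<in> nz_zero_divisors R. \<exists>y \<in> nz_zero_divisors R.
         A = ann_class R x \<and> B = ann_class R y \<and> x \<otimes>\<^bsub>R\<^esub> y = \<zero>\<^bsub>R\<^esub>)"

definition GammaE_complete :: "('a, 'b) ring_scheme \<Rightarrow> bool" where
  "GammaE_complete R \<longleftrightarrow>
     (\<forall>A \<in> GammaE_vertices R. \<forall>B \<in> GammaE_vertices R. A \<noteq> B \<longrightarrow> GammaE_adj R A B)"

end

theory Submission
  imports Defs
begin

lemma ann_ideal:
  fixes R (structure)
  assumes "cring R" "x \<in> carrier R"
  shows "ideal (ann R x) R"
proof -
  interpret cring R by fact
  show ?thesis
  proof (rule idealI)
    show "ring R" by (rule ring_axioms)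
    show "subgroup (ann R x) (add_monoid R)"
    proof (rule add.subgroupI)
      show "ann R x \<subseteq> carrier R" by (auto simp: ann_def)
      show "ann R x \<noteq> {}" using assms by (auto simp: ann_def intro!: exI[of _ "\<zero>\<^bsub>R\<^esub>"])
      fix a assume "a \<in> ann R x"
      then show "\<ominus> a \<in> ann R x" using assms
        by (auto simp: ann_def r_minus)
    next
      fix a b assume "a \<in> ann R x" "b \<in> ann R x"
      then show "a \<oplus> b \<in> ann R x" using assms
        by (auto simp: ann_def r_distr)
    qed
  next
    fix a y assume "a \<in> ann R x" "y \<in> carrier R"
    then show "y \<otimes> a \<in> ann R x" using assms
      by (auto simp: ann_def m_lcomm[of x y a])
  next
    fix a y assume "a \<in> ann R x" "y \<in> carrier R"
    then show "a \<otimes> y \<in> ann R x" using assms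
      by (simp add: ann_def m_assoc[symmetric])
  qed
qed

lemma ann_eq_if_class_eq:
  assumes "a \<in> carrier R" "ann_class R a = ann_class R b"
  shows "ann R a = ann R b"
proof -
  have "a \<in> ann_class R a" using assms(1) by (simp add: ann_class_def)
  then have "a \<in> ann_class R b" using assms(2) by simp
  then show ?thesis by (simp add: ann_class_def)
qed

theorem proposition1p5:
  fixes R :: "('a, 'b) ring_scheme"
  assumes "cring R" and "noetherian_ring R"
    and "\<exists>A \<in> GammaE_vertices R. \<exists>B \<in> GammaE_vertices R. \<exists>C \<in> GammaE_vertices R.
           A \<noteq> B \<and> A \<noteq> C \<and> B \<noteq> C"
  shows "\<not> GammaE_complete R"
proof
  assume compl: "GammaE_complete R"
  interpret cring R by fact
  interpret N: noetherian_ring R by fact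
  define Z where "Z = nz_zero_divisors R"
  have Zc: "w \<in> carrier R" if "w \<in> Z" for w using that by (simp add: Z_def nz_zero_divisors_def)
  have Z0: "w \<noteq> \<zero>\<^bsub>R\<^esub>" if "w \<in> Z" for w using that by (simp add: Z_def nz_zero_divisors_def)
  have ZI: "w \<in> Z" if "w \<in> carrier R" "w \<noteq> \<zero>\<^bsub>R\<^esub>" "v \<in> carrier R" "v \<noteq> \<zero>\<^bsub>R\<^esub>" "w \<otimes>\<^bsub>R\<^esub> v = \<zero>\<^bsub>R\<^esub>" for w v
    using that by (auto simp: Z_def nz_zero_divisors_def)
  have adj: "a \<otimes>\<^bsub>R\<^esub> b = \<zero>\<^bsub>R\<^esub>" if ab: "a \<in> Z" "b \<in> Z" "ann R a \<noteq> ann R b" for a b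
  proof -
    have "ann_class R a \<noteq> ann_class R b"
      using ann_eq_if_class_eq[of a R b] ab Zc by auto
    moreover have "ann_class R a \<in> GammaE_vertices R" "ann_class R b \<in> GammaE_vertices R"
      using ab by (auto simp: GammaE_vertices_def Z_def)
    ultimately have "GammaE_adj R (ann_class R a) (ann_class R b)"
      using compl by (auto simp: GammaE_complete_def)
    then obtain x y where xy: "x \<in> Z" "y \<in> Z" "ann_class R a = ann_class R x"
      "ann_class R b = ann_class R y" "x \<otimes>\<^bsub>R\<^esub> y = \<zero>\<^bsub>R\<^esub>"
      by (auto simp: GammaE_adj_def Z_def)
    have e1: "ann R a = ann R x" using ann_eq_if_class_eq[of a R x] xy ab Zc by auto
    have e2: "ann R b = ann R y" using ann_eq_if_class_eq[of b R y] xy ab Zc by auto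
    have "y \<in> ann R x" using xy Zc by (simp add: ann_def)
    then have "y \<in> ann R a" using e1 by simp
    then have "a \<otimes>\<^bsub>R\<^esub> y = \<zero>\<^bsub>R\<^esub>" by (simp add: ann_def)
    then have "a \<in> ann R y" using xy ab Zc m_comm by (simp add: ann_def)
    then have "a \<in> ann R b" using e2 by simp
    then have "b \<otimes>\<^bsub>R\<^esub> a = \<zero>\<^bsub>R\<^esub>" by (simp add: ann_def)
    then show ?thesis using ab Zc m_comm by metis
  qed
  have sq: False if rsx: "r \<in> Z" "s \<in> Z" "x \<in> Z" "ann R r \<noteq> ann R s" "ann R x \<noteq> ann R r"
      "ann R x \<noteq> ann R s" "r \<otimes>\<^bsub>R\<^esub> r \<noteq> \<zero>\<^bsub>R\<^esub>" "s \<otimes>\<^bsub>R\<^esub> s \<noteq> \<zero>\<^bsub>R\<^esub>" for r s x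
  proof -
    have rc: "r \<in> carrier R" and sc: "s \<in> carrier R" and xc: "x \<in> carrier R" using rsx Zc by auto
    have rs: "r \<otimes>\<^bsub>R\<^esub> s = \<zero>\<^bsub>R\<^esub>" using adj[OF rsx(1,2,4)] .
    have sr: "s \<otimes>\<^bsub>R\<^esub> r = \<zero>\<^bsub>R\<^esub>" using rs m_comm rc sc by metis
    have rx: "r \<otimes>\<^bsub>R\<^esub> x = \<zero>\<^bsub>R\<^esub>" using adj[OF rsx(1,3)] rsx(5) by argo
    have sx: "s \<otimes>\<^bsub>R\<^esub> x = \<zero>\<^bsub>R\<^esub>" using adj[OF rsx(2,3)] rsx(6) by argo
    have tc: "r \<oplus>\<^bsub>R\<^esub> s \<in> carrier R" using rc sc by simp
    have t0: "r \<oplus>\<^bsub>R\<^esub> s \<noteq> \<zero>\<^bsub>R\<^esub>"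
    proof
      assume "r \<oplus>\<^bsub>R\<^esub> s = \<zero>\<^bsub>R\<^esub>"
      then have "(r \<oplus>\<^bsub>R\<^esub> s) \<otimes>\<^bsub>R\<^esub> r = \<zero>\<^bsub>R\<^esub>" using rc by simp
      then have "r \<otimes>\<^bsub>R\<^esub> r = \<zero>\<^bsub>R\<^esub>" using rc sc sr by (simp add: l_distr)
      then show False using rsx by simp
    qed
    have "(r \<oplus>\<^bsub>R\<^esub> s) \<otimes>\<^bsub>R\<^esub> x = \<zero>\<^bsub>R\<^esub>" using rc sc xc rx sx by (simp add: l_distr)
    then have tZ: "r \<oplus>\<^bsub>R\<^esub> s \<in> Z" using ZI[OF tc t0 xc Z0[OF rsx(3)]] by simp
    show False
    proof (cases "ann R (r \<oplus>\<^bsub>R\<^esub> s) = ann R r")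
      case True
      then have "ann R (r \<oplus>\<^bsub>R\<^esub> s) \<noteq> ann R s" using rsx by simp
      then have "(r \<oplus>\<^bsub>R\<^esub> s) \<otimes>\<^bsub>R\<^esub> s = \<zero>\<^bsub>R\<^esub>" using adj[OF tZ rsx(2)] by blast
      then have "s \<otimes>\<^bsub>R\<^esub> s = \<zero>\<^bsub>R\<^esub>" using rc sc rs by (simp add: l_distr)
      then show False using rsx by simp
    next
      case False
      then have "(r \<oplus>\<^bsub>R\<^esub> s) \<otimes>\<^bsub>R\<^esub> r = \<zero>\<^bsub>R\<^esub>" using adj[OF tZ rsx(1) False] by blast
      then have "r \<otimes>\<^bsub>R\<^esub> r = \<zero>\<^bsub>R\<^esub>" using rc sc sr by (simp add: l_distr)
      then show False using rsx by simp
    qed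
  qed
  obtain a b c where abc: "a \<in> Z" "b \<in> Z" "c \<in> Z"
    "ann_class R a \<noteq> ann_class R b" "ann_class R a \<noteq> ann_class R c" "ann_class R b \<noteq> ann_class R c"
    using assms(3) by (auto simp: GammaE_vertices_def Z_def)
  have cls: "ann_class R u = ann_class R v" if "ann R u = ann R v" for u v
    using that by (simp add: ann_class_def)
  have abc': "ann R a \<noteq> ann R b" "ann R a \<noteq> ann R c" "ann R b \<noteq> ann R c"
    using abc cls by blast+
  have "\<exists>M\<in>ann R ` Z. \<forall>X\<in>ann R ` Z. M \<subseteq> X \<longrightarrow> X = M"
  proof (rule subset_Zorn)
    fix C assume C: "subset.chain (ann R ` Z) C"
    show "\<exists>U\<in>ann R ` Z. \<forall>X\<in>C. X \<subseteq> U"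
    proof (cases "C = {}")
      case True then show ?thesis using abc by blast
    next
      case False
      have CS: "C \<subseteq> ann R ` Z" using C unfolding pred_on.chain_def by simp
      have "C \<subseteq> {I. ideal I R}"
      proof
        fix I assume "I \<in> C"
        then obtain w where "w \<in> Z" "I = ann R w" using CS by blast
        then show "I \<in> {I. ideal I R}" using ann_ideal[OF assms(1) Zc] by simp
      qed
      then have "subset.chain {I. ideal I R} C"
        using C unfolding pred_on.chain_def by simp
      then have U: "\<Union>C \<in> C" using N.ideal_chain_is_trivial[OF False] by simp
      have "\<forall>X\<in>C. X \<subseteq> \<Union>C" by (simp add: Union_upper)
      moreover have "\<Union>C \<in> ann R ` Z" using U CS by (rule subsetD[rotated])
      ultimately show ?thesis by (rule bexI)
    qed
  qed
  then obtain M where M: "M \<in> ann R ` Z" and Mmax: "\<And>X. X \<in> ann R ` Z \<Longrightarrow> M \<subseteq> X \<Longrightarrow> X = M"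
    by blast
  obtain x where x: "x \<in> Z" and Mx: "M = ann R x" using M by (rule imageE)
  have xmax: "ann R w = ann R x" if "w \<in> Z" "ann R x \<subseteq> ann R w" for w
    using Mmax[of "ann R w"] that Mx by simp
  have wit: "\<exists>r. r \<in> Z \<and> ann R r = ann R y \<and> r \<otimes>\<^bsub>R\<^esub> r \<noteq> \<zero>\<^bsub>R\<^esub>"
    if y: "y \<in> Z" "ann R y \<noteq> ann R x" for y
  proof -
    have "\<not> ann R x \<subseteq> ann R y" using xmax y by blast
    then obtain r where r: "r \<in> ann R x" "r \<notin> ann R y" by blast
    have rc: "r \<in> carrier R" and xr: "x \<otimes>\<^bsub>R\<^esub> r = \<zero>\<^bsub>R\<^esub>" using r by (auto simp: ann_def)
    have yr: "y \<otimes>\<^bsub>R\<^esub> r \<noteq> \<zero>\<^bsub>R\<^esub>" using r rc by (simp add: ann_def)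
    have r0: "r \<noteq> \<zero>\<^bsub>R\<^esub>" using yr Zc[OF y(1)] by auto
    have rZ: "r \<in> Z" using ZI[OF rc r0 Zc[OF x] Z0[OF x]] xr m_comm rc Zc[OF x] by metis
    have "ann R r = ann R y"
    proof (rule ccontr)
      assume "ann R r \<noteq> ann R y"
      then have "r \<otimes>\<^bsub>R\<^esub> y = \<zero>\<^bsub>R\<^esub>" using adj[OF rZ y(1)] by blast
      then show False using yr m_comm rc Zc[OF y(1)] by metis
    qed
    moreover have "r \<notin> ann R r" using r(2) calculation by simp
    then have "r \<otimes>\<^bsub>R\<^esub> r \<noteq> \<zero>\<^bsub>R\<^esub>" using rc by (simp add: ann_def)
    ultimately show ?thesis using rZ by blast
  qed
  obtain y z where yz: "y \<in> Z" "z \<in> Z" "ann R y \<noteq> ann R x" "ann R z \<noteq> ann R x" "ann R y \<noteq> ann R z"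
  proof (cases "ann R a = ann R x")
    case True then show ?thesis using that[of b c] abc abc' by simp
  next
    case F1: False
    show ?thesis
    proof (cases "ann R b = ann R x")
      case True then show ?thesis using that[of a c] abc abc' F1 by simp
    next
      case False then show ?thesis using that[of a b] abc abc' F1 by simp
    qed
  qed
  obtain r where r: "r \<in> Z" "ann R r = ann R y" "r \<otimes>\<^bsub>R\<^esub> r \<noteq> \<zero>\<^bsub>R\<^esub>" using wit yz by blast
  obtain s where s: "s \<in> Z" "ann R s = ann R z" "s \<otimes>\<^bsub>R\<^esub> s \<noteq> \<zero>\<^bsub>R\<^esub>" using wit yz by blast
  show False using sq[OF r(1) s(1) x] r s yz by auto
qed

end
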